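(* Consider $J=2$ classes with sample sizes $n_1,n_2\ge 2$ and $n=n_1+n_2$. Suppose one of the following holds: (i) $\tilde h_b(1,2)>\tilde h_b(1,1)>\tilde h_b(2,2)$ and $n_1>n_2+1$; (ii) $\tilde h_b(1,2)>\tilde h_b(2,2)>\tilde h_b(1,1)$ and $n_1<n_2-1$; (iii) $\tilde h_b(1,1)>\tilde h_b(1,2)\ge\frac34\tilde h_b(1,1)+\frac14\tilde h_b(2,2)>\tilde h_b(2,2)$ and $n_1>1+\frac{n-1}{2}\Big\{\frac{\tilde h_b(1,1)-\tilde h_b(2,2)}{2\tilde h_b(1,2)-\tilde h_b(1,1)-\tilde h_b(2,2)}\Big\}$; (iv) $\tilde h_b(2,2)>\tilde h_b(1,2)\ge\frac14\tilde h_b(1,1)+\frac34\tilde h_b(2,2)>\tilde h_b(1,1)$ and $n_1<(n-1)\Big\{1-\frac12\frac{\tilde h_b(2,2)-\tilde h_b(1,1)}{2\tilde h_b(1,2)-\tilde h_b(1,1)-\tilde h_b(2,2)}\Big\}$. Then $\tilde\xi_b(1,2)>\max\{\tilde\tau_b(1,2),\tilde\tau_b(2,1)\}$.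
   Context: $\tilde h_b(l,l')$ ($l,l'\in\{1,2\}$) are real numbers with $\tilde h_b(1,2)=\tilde h_b(2,1)$ (in the paper, $\tilde h_b(l,l')=\phi\big[b^{-1}\sum_{i=1}^b\mathrm E\gamma(d_i^{-1}\|\mathbf U_i-\mathbf V_i\|^2)\big]$ for independent $\mathbf U\sim\mathbf F_l$, $\mathbf V\sim\mathbf F_{l'}$ with sub-vectors on clusters of coordinates). $\tilde\xi_b(1,2)=\tilde h_b(1,2)-\frac12[\tilde h_b(1,1)+\tilde h_b(2,2)]$; $\tilde\tau_b(1,2)=\frac{n_1}{n-1}|\tilde h_b(1,2)-\tilde h_b(1,1)|+\frac{n_2-1}{n-1}|\tilde h_b(1,2)-\tilde h_b(2,2)|$; $\tilde\tau_b(2,1)=\frac{n_1-1}{n-1}|\tilde h_b(1,2)-\tilde h_b(1,1)|+\frac{n_2}{n-1}|\tilde h_b(1,2)-\tilde h_b(2,2)|$. *)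

theory Defs
  imports Complex_Main
begin

text \<open>The quantities h_b(1,1), h_b(1,2)=h_b(2,1), h_b(2,2) are treated as arbitrary reals
  h11, h12, h22; n = n1 + n2.\<close>

definition xi12 :: "real \<Rightarrow> real \<Rightarrow> real \<Rightarrow> real" where
  "xi12 h11 h12 h22 = h12 - (h11 + h22) / 2"

definition tau12 :: "nat \<Rightarrow> nat \<Rightarrow> real \<Rightarrow> real \<Rightarrow> real \<Rightarrow> real" where
  "tau12 n1 n2 h11 h12 h22 =
     real n1 / (real (n1 + n2) - 1) * \<bar>h12 - h11\<bar>
     + (real n2 - 1) / (real (n1 + n2) - 1) * \<bar>h12 - h22\<bar>"

definition tau21 :: "nat \<Rightarrow> nat \<Rightarrow> real \<Rightarrow> real \<Rightarrow> real \<Rightarrow> real" where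
  "tau21 n1 n2 h11 h12 h22 =
     (real n1 - 1) / (real (n1 + n2) - 1) * \<bar>h12 - h11\<bar>
     + real n2 / (real (n1 + n2) - 1) * \<bar>h12 - h22\<bar>"

end

theory Submission
  imports Defs
begin

theorem lemmaA2:
  fixes n1 n2 :: nat and h11 h12 h22 :: real
  assumes "n1 \<ge> 2" and "n2 \<ge> 2"
  assumes "(h12 > h11 \<and> h11 > h22 \<and> real n1 > real n2 + 1)
    \<or> (h12 > h22 \<and> h22 > h11 \<and> real n1 < real n2 - 1)
    \<or> (h11 > h12 \<and> h12 \<ge> 3/4 * h11 + 1/4 * h22 \<and> 3/4 * h11 + 1/4 * h22 > h22 \<and>
        real n1 > 1 + (real (n1 + n2) - 1) / 2 * ((h11 - h22) / (2 * h12 - h11 - h22)))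
    \<or> (h22 > h12 \<and> h12 \<ge> 1/4 * h11 + 3/4 * h22 \<and> 1/4 * h11 + 3/4 * h22 > h11 \<and>
        real n1 < (real (n1 + n2) - 1) * (1 - 1/2 * ((h22 - h11) / (2 * h12 - h11 - h22))))"
  shows "xi12 h11 h12 h22 > max (tau12 n1 n2 h11 h12 h22) (tau21 n1 n2 h11 h12 h22)"
proof -
  define x where "x = real n1"
  define y where "y = real n2"
  define N where "N = x + y - 1"
  have x2: "x \<ge> 2" and y2: "y \<ge> 2" using assms(1,2) by (auto simp: x_def y_def)
  have Npos: "N > 0" using x2 y2 by (simp add: N_def)
  have NN: "real (n1 + n2) - 1 = N" by (simp add: N_def x_def y_def)
  have T12: "tau12 n1 n2 h11 h12 h22 = (x * \<bar>h12 - h11\<bar> + (y - 1) * \<bar>h12 - h22\<bar>) / N"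
    unfolding tau12_def NN x_def y_def by (simp add: add_divide_distrib)
  have T21: "tau21 n1 n2 h11 h12 h22 = ((x - 1) * \<bar>h12 - h11\<bar> + y * \<bar>h12 - h22\<bar>) / N"
    unfolding tau21_def NN x_def y_def by (simp add: add_divide_distrib)
  have X: "xi12 h11 h12 h22 = h12 - (h11 + h22) / 2" by (simp add: xi12_def)
  have e3: "x * \<bar>h12 - h11\<bar> + (y - 1) * \<bar>h12 - h22\<bar> = (x - 1) * \<bar>h12 - h11\<bar> + y * \<bar>h12 - h22\<bar> + \<bar>h12 - h11\<bar> - \<bar>h12 - h22\<bar>"
      by (simp add: algebra_simps)
  have main: "(x * \<bar>h12 - h11\<bar> + (y - 1) * \<bar>h12 - h22\<bar>) < (h12 - (h11 + h22) / 2) * N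
      \<and> ((x - 1) * \<bar>h12 - h11\<bar> + y * \<bar>h12 - h22\<bar>) < (h12 - (h11 + h22) / 2) * N"
    using assms(3) unfolding NN x_def[symmetric] y_def[symmetric]
  proof (elim disjE conjE)
    assume a: "h12 > h11" "h11 > h22" "x > y + 1"
    have p: "(h11 - h22) * (x - y - 1) > 0" using a by (intro mult_pos_pos) auto
    have e1: "\<bar>h12 - h11\<bar> = h12 - h11" "\<bar>h12 - h22\<bar> = h12 - h22" using a by auto
    have e2: "(h12 - (h11 + h22) / 2) * N - ((x - 1) * (h12 - h11) + y * (h12 - h22))
       = (h11 - h22) * (x - y - 1) / 2" by (simp add: N_def field_simps)
    show ?thesis unfolding e1 using e3[unfolded e1] e2 p a by (intro conjI; linarith)
  next
    assume a: "h12 > h22" "h22 > h11" "x < y - 1"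
    have p: "(h22 - h11) * (y - x - 1) > 0" using a by (intro mult_pos_pos) auto
    have e1: "\<bar>h12 - h11\<bar> = h12 - h11" "\<bar>h12 - h22\<bar> = h12 - h22" using a by auto
    have e2: "(h12 - (h11 + h22) / 2) * N - (x * (h12 - h11) + (y - 1) * (h12 - h22))
       = (h22 - h11) * (y - x - 1) / 2" by (simp add: N_def field_simps)
    show ?thesis unfolding e1 using e3[unfolded e1] e2 p a by (intro conjI; linarith)
  next
    assume a: "h11 > h12" "h12 \<ge> 3/4 * h11 + 1/4 * h22" "3/4 * h11 + 1/4 * h22 > h22"
      "x > 1 + N / 2 * ((h11 - h22) / (2 * h12 - h11 - h22))"
    have D: "2 * h12 - h11 - h22 > 0" using a by linarith
    have "x - 1 > N / 2 * ((h11 - h22) / (2 * h12 - h11 - h22))" using a by linarith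
    hence k: "2 * ((x - 1) * (2 * h12 - h11 - h22)) > N * (h11 - h22)" using D
      by (simp add: field_simps)
    have e1: "\<bar>h12 - h11\<bar> = h11 - h12" "\<bar>h12 - h22\<bar> = h12 - h22" using a by auto
    have e2: "(h12 - (h11 + h22) / 2) * N - ((x - 1) * (h11 - h12) + y * (h12 - h22))
       = (x - 1) * (2 * h12 - h11 - h22) - N * (h11 - h22) / 2" by (simp add: N_def field_simps)
    show ?thesis unfolding e1 using e3[unfolded e1] e2 k D by (intro conjI; linarith)
  next
    assume a: "h22 > h12" "h12 \<ge> 1/4 * h11 + 3/4 * h22" "1/4 * h11 + 3/4 * h22 > h11"
      "x < N * (1 - 1/2 * ((h22 - h11) / (2 * h12 - h11 - h22)))"
    have D: "2 * h12 - h11 - h22 > 0" using a by linarith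
    have k: "x * (2 * h12 - h11 - h22) < N * ((2 * h12 - h11 - h22) - 1/2 * (h22 - h11))"
      using a(4) D by (simp add: field_simps)
    have e1: "\<bar>h12 - h11\<bar> = h12 - h11" "\<bar>h12 - h22\<bar> = h22 - h12" using a by auto
    have e2: "(h12 - (h11 + h22) / 2) * N - (x * (h12 - h11) + (y - 1) * (h22 - h12))
       = N * ((2 * h12 - h11 - h22) - 1/2 * (h22 - h11)) - x * (2 * h12 - h11 - h22)"
      by (simp add: N_def field_simps)
    show ?thesis unfolding e1 using e3[unfolded e1] e2 k D by (intro conjI; linarith)
  qed
  show ?thesis unfolding T12 T21 X using main Npos
    by (simp add: divide_less_eq)
qed

end
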